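(* (i) Let $\beta(x)=(1+x)^{-1}$. There exist $s\ge1$, $n>s+1$, a probability distribution $(p_{ij})$ on $\mathcal{P}_n$ with $p_{ij}=p_{ji}>0$, initial data $Y_0\in(\mathbb{R}^s)^n$ and a constant $c>0$ such that the solution $Y(t)$ of the gradient flow of relative entropy with $Y(0)=Y_0$ satisfies $\operatorname{diam}Y(t)\ge c\,t^{1/4}$ for all $t\ge0$. (ii) Let $\beta(x)=e^{-x}$. There exist $s\ge1$, $n>s+1$, a probability distribution $(p_{ij})$ on $\mathcal{P}_n$ with $p_{ij}=p_{ji}>0$, initial data $Y_0\in(\mathbb{R}^s)^n$ and a constant $c>0$ such that the corresponding solution satisfies $\operatorname{diam}Y(t)\ge c$ for all $t\ge0$. (In both cases such examples exist with $n=3$, $s=1$.)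
   Context: Standing setup. Fix integers $s\ge 1$ and $n>s+1$. Let $\mathcal{P}_n=\{(i,j): i,j\in\{1,\dots,n\},\ i\neq j\}$. Let $(p_{ij})_{i\neq j}$ be a probability distribution on $\mathcal{P}_n$ (so $\sum_{i\neq j}p_{ij}=1$) with $p_{ij}=p_{ji}>0$ for all $i\neq j$. Let $\beta:[0,\infty)\to(0,\infty)$ be a smooth decreasing function with $\sup_{x\ge 0}|(\log\beta)'(x)|<\infty$. For points $Y=(y_1,\dots,y_n)$ with $y_i\in\mathbb{R}^s$ define $q_{ij}=\beta(|y_i-y_j|^2)/\sum_{k\neq \ell}\beta(|y_k-y_\ell|^2)$ for $i\neq j$, and the relative entropy $\mathcal{C}(Y)=\sum_{i\neq j}p_{ij}\log(p_{ij}/q_{ij})$. The gradient flow of $\mathcal{C}$ is the ODE system $$\frac{dy_i}{dt}=4\sum_{j\neq i}(p_{ij}-q_{ij})(y_i-y_j)(\log\beta)'(|y_i-y_j|^2),\qquad i=1,\dots,n,$$ which, for any initial data $Y_0=Y(0)\in(\mathbb{R}^s)^n$, has a solution $Y(t)=(y_1(t),\dots,y_n(t))$ for all $t\ge0$. $\operatorname{diam}Y=\max_{i,j}|y_i-y_j|$. *)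

theory Defs
  imports "HOL-Analysis.Analysis"
begin

text \<open>Points of R^s are functions nat => real, coordinates indexed by {1..s};
 configurations Y = (y_1,...,y_n) are functions nat => (nat => real), indices {1..n}.\<close>

definition sqd :: "nat \<Rightarrow> (nat \<Rightarrow> real) \<Rightarrow> (nat \<Rightarrow> real) \<Rightarrow> real" where
  "sqd s x y = (\<Sum>k\<in>{1..s}. (x k - y k)^2)"

definition pairs :: "nat \<Rightarrow> (nat \<times> nat) set" where
  "pairs n = {(i,j). i \<in> {1..n} \<and> j \<in> {1..n} \<and> i \<noteq> j}"

definition sym_pos_prob :: "nat \<Rightarrow> (nat \<Rightarrow> nat \<Rightarrow> real) \<Rightarrow> bool" where
  "sym_pos_prob n p \<longleftrightarrow>
     (\<forall>(i,j)\<in>pairs n. p i j = p j i \<and> p i j > 0) \<and> (\<Sum>(i,j)\<in>pairs n. p i j) = 1"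

definition qaff :: "(real \<Rightarrow> real) \<Rightarrow> nat \<Rightarrow> nat \<Rightarrow> (nat \<Rightarrow> nat \<Rightarrow> real) \<Rightarrow> nat \<Rightarrow> nat \<Rightarrow> real" where
  "qaff \<beta> s n Y i j = \<beta> (sqd s (Y i) (Y j)) / (\<Sum>(k,l)\<in>pairs n. \<beta> (sqd s (Y k) (Y l)))"

text \<open>Right-hand side (k-th coordinate of dy_i/dt) of the gradient flow of relative entropy.\<close>
definition flow_rhs :: "(real \<Rightarrow> real) \<Rightarrow> nat \<Rightarrow> nat \<Rightarrow> (nat \<Rightarrow> nat \<Rightarrow> real)
    \<Rightarrow> (nat \<Rightarrow> nat \<Rightarrow> real) \<Rightarrow> nat \<Rightarrow> nat \<Rightarrow> real" where
  "flow_rhs \<beta> s n p Y i k = 4 * (\<Sum>j\<in>{1..n} - {i}.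
      (p i j - qaff \<beta> s n Y i j) * (Y i k - Y j k) * deriv (\<lambda>x. ln (\<beta> x)) (sqd s (Y i) (Y j)))"

definition is_flow_solution :: "(real \<Rightarrow> real) \<Rightarrow> nat \<Rightarrow> nat \<Rightarrow> (nat \<Rightarrow> nat \<Rightarrow> real)
    \<Rightarrow> (nat \<Rightarrow> nat \<Rightarrow> real) \<Rightarrow> (real \<Rightarrow> nat \<Rightarrow> nat \<Rightarrow> real) \<Rightarrow> bool" where
  "is_flow_solution \<beta> s n p Y0 Y \<longleftrightarrow>
     (\<forall>i\<in>{1..n}. \<forall>k\<in>{1..s}. Y 0 i k = Y0 i k) \<and>
     (\<forall>t\<ge>0. \<forall>i\<in>{1..n}. \<forall>k\<in>{1..s}.
        ((\<lambda>\<tau>. Y \<tau> i k) has_real_derivative flow_rhs \<beta> s n p (Y t) i k) (at t within {0..}))"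

definition diam_conf :: "nat \<Rightarrow> nat \<Rightarrow> (nat \<Rightarrow> nat \<Rightarrow> real) \<Rightarrow> real" where
  "diam_conf s n Y = Max {sqrt (sqd s (Y i) (Y j)) | i j. i \<in> {1..n} \<and> j \<in> {1..n}}"

end

theory Submission
  imports Defs
begin


lemma pairs3: "pairs 3 = {(1,2),(1,3),(2,1),(2,3),(3,1),(3,2)}"
  unfolding pairs_def by auto

lemma sum_pairs3: "(\<Sum>(i,j)\<in>pairs 3. f i j) = f 1 2 + f 1 3 + f 2 1 + f 2 3 + f 3 1 + f 3 2"
  unfolding pairs3 by (simp add: add.assoc)

lemma sqd1: "sqd 1 x y = (x 1 - y 1)^2" unfolding sqd_def by simp

lemma rhs_gen:
  fixes \<beta> :: "real \<Rightarrow> real" and Yc :: "nat \<Rightarrow> nat \<Rightarrow> real" and p :: "nat \<Rightarrow> nat \<Rightarrow> real"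
  defines "Dl \<equiv> deriv (\<lambda>x. ln (\<beta> x))"
  defines "A \<equiv> Yc 1 1" and "B \<equiv> Yc 2 1" and "C \<equiv> Yc 3 1"
  defines "Z \<equiv> \<beta> ((A-B)^2) + \<beta> ((A-C)^2) + \<beta> ((B-A)^2) + \<beta> ((B-C)^2) + \<beta> ((C-A)^2) + \<beta> ((C-B)^2)"
  shows "flow_rhs \<beta> 1 3 p Yc 1 1 = 4*((p 1 2 - \<beta>((A-B)^2)/Z)*(A-B)*Dl((A-B)^2) + (p 1 3 - \<beta>((A-C)^2)/Z)*(A-C)*Dl((A-C)^2))"
    and "flow_rhs \<beta> 1 3 p Yc 2 1 = 4*((p 2 1 - \<beta>((B-A)^2)/Z)*(B-A)*Dl((B-A)^2) + (p 2 3 - \<beta>((B-C)^2)/Z)*(B-C)*Dl((B-C)^2))"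
    and "flow_rhs \<beta> 1 3 p Yc 3 1 = 4*((p 3 1 - \<beta>((C-A)^2)/Z)*(C-A)*Dl((C-A)^2) + (p 3 2 - \<beta>((C-B)^2)/Z)*(C-B)*Dl((C-B)^2))"
proof -
  have s1: "{1..3::nat} - {1} = {2,3}" "{1..3::nat} - {2} = {1,3}" "{1..3::nat} - {3} = {1,2}" by auto
  show "flow_rhs \<beta> 1 3 p Yc 1 1 = 4*((p 1 2 - \<beta>((A-B)^2)/Z)*(A-B)*Dl((A-B)^2) + (p 1 3 - \<beta>((A-C)^2)/Z)*(A-C)*Dl((A-C)^2))"
    unfolding flow_rhs_def s1 qaff_def sum_pairs3 sqd1 assms by simp
  show "flow_rhs \<beta> 1 3 p Yc 2 1 = 4*((p 2 1 - \<beta>((B-A)^2)/Z)*(B-A)*Dl((B-A)^2) + (p 2 3 - \<beta>((B-C)^2)/Z)*(B-C)*Dl((B-C)^2))"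
    unfolding flow_rhs_def s1 qaff_def sum_pairs3 sqd1 assms by simp
  show "flow_rhs \<beta> 1 3 p Yc 3 1 = 4*((p 3 1 - \<beta>((C-A)^2)/Z)*(C-A)*Dl((C-A)^2) + (p 3 2 - \<beta>((C-B)^2)/Z)*(C-B)*Dl((C-B)^2))"
    unfolding flow_rhs_def s1 qaff_def sum_pairs3 sqd1 assms by (simp add: add.commute)
qed

lemma Dl1: "(d::real) \<ge> 0 \<Longrightarrow> deriv (\<lambda>x. ln (1 / (1 + x))) d = - 1 / (1 + d)"
proof -
  assume d: "d \<ge> 0"
  have "((\<lambda>x. ln (1 / (1 + x))) has_real_derivative (- 1 / (1 + d))) (at d)"
    using d apply (auto intro!: derivative_eq_intros simp: field_simps power2_eq_square)
    by (smt (verit) mult_nonneg_nonneg)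
  then show ?thesis by (rule DERIV_imp_deriv)
qed

lemma Dl2: "deriv (\<lambda>x. ln (exp (- x))) (d::real) = - 1"
proof -
  have "(\<lambda>x::real. ln (exp (- x))) = (\<lambda>x. - x)" by simp
  moreover have "deriv (\<lambda>x::real. - x) d = - 1"
    by (rule DERIV_imp_deriv) (auto intro!: derivative_eq_intros)
  ultimately show ?thesis by simp
qed

definition pp :: "nat \<Rightarrow> nat \<Rightarrow> real" where "pp = (\<lambda>i j. if (i=1 \<and> j=3) \<or> (i=3 \<and> j=1) then (1/50::real) else 6/25)"
definition Yinit :: "nat \<Rightarrow> nat \<Rightarrow> real" where "Yinit = (\<lambda>i k. if i = 1 then (-1::real) else if i = 2 then 0 else 1)"

lemma pp_vals: "pp 1 2 = 6/25" "pp 2 1 = 6/25" "pp 2 3 = 6/25" "pp 3 2 = 6/25" "pp 1 3 = 1/50" "pp 3 1 = 1/50"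
  unfolding pp_def by auto

lemma sym_pp: "sym_pos_prob 3 pp"
  unfolding sym_pos_prob_def sum_pairs3 pairs3 by (auto simp: pp_def)

definition "u x = 1 / (1 + x^2::real)"
definition "Z1 A B C = 2 * (u (A-B) + u (A-C) + u (B-C))"
definition "psi Z P x = (u x / Z - P) * u x * x"

lemma u_sym: "u (x - y) = u (y - x)" unfolding u_def by (simp add: power2_commute)
lemma u_pos: "u x > 0" unfolding u_def by (simp add: add_pos_nonneg)

lemma Dl1': "(d::real) \<ge> 0 \<Longrightarrow> deriv (\<lambda>x. ln (1 / (1 + x))) d = - (1 / (1 + d))"
  using Dl1 by simp

lemma rhs1:
  fixes Yc :: "nat \<Rightarrow> nat \<Rightarrow> real"
  defines "A \<equiv> Yc 1 1" and "B \<equiv> Yc 2 1" and "C \<equiv> Yc 3 1"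
  shows "flow_rhs (\<lambda>x. 1 / (1 + x)) 1 3 pp Yc 1 1 = 4 * (psi (Z1 A B C) (6/25) (A-B) + psi (Z1 A B C) (1/50) (A-C))"
    and "flow_rhs (\<lambda>x. 1 / (1 + x)) 1 3 pp Yc 2 1 = 4 * (psi (Z1 A B C) (6/25) (B-A) + psi (Z1 A B C) (6/25) (B-C))"
    and "flow_rhs (\<lambda>x. 1 / (1 + x)) 1 3 pp Yc 3 1 = 4 * (psi (Z1 A B C) (1/50) (C-A) + psi (Z1 A B C) (6/25) (C-B))"
proof -
  have Z: "1 / (1 + (A - B)\<^sup>2) + 1 / (1 + (A - C)\<^sup>2) + 1 / (1 + (B - A)\<^sup>2) + 1 / (1 + (B - C)\<^sup>2) +
           1 / (1 + (C - A)\<^sup>2) + 1 / (1 + (C - B)\<^sup>2) = Z1 A B C"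
    unfolding Z1_def u_def by (simp add: power2_commute)
  have e: "u (B - A) = u (A - B)" "u (C - A) = u (A - C)" "u (C - B) = u (B - C)" by (simp_all add: u_sym)
  show "flow_rhs (\<lambda>x. 1 / (1 + x)) 1 3 pp Yc 1 1 = 4 * (psi (Z1 A B C) (6/25) (A-B) + psi (Z1 A B C) (1/50) (A-C))"
    unfolding rhs_gen A_def[symmetric] B_def[symmetric] C_def[symmetric] pp_vals Z
    by (simp only: Dl1' zero_le_power2 u_def[symmetric]) (simp add: psi_def e algebra_simps diff_divide_distrib add_divide_distrib)
  show "flow_rhs (\<lambda>x. 1 / (1 + x)) 1 3 pp Yc 2 1 = 4 * (psi (Z1 A B C) (6/25) (B-A) + psi (Z1 A B C) (6/25) (B-C))"
    unfolding rhs_gen A_def[symmetric] B_def[symmetric] C_def[symmetric] pp_vals Z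
    by (simp only: Dl1' zero_le_power2 u_def[symmetric]) (simp add: psi_def e algebra_simps diff_divide_distrib add_divide_distrib)
  show "flow_rhs (\<lambda>x. 1 / (1 + x)) 1 3 pp Yc 3 1 = 4 * (psi (Z1 A B C) (1/50) (C-A) + psi (Z1 A B C) (6/25) (C-B))"
    unfolding rhs_gen A_def[symmetric] B_def[symmetric] C_def[symmetric] pp_vals Z
    by (simp only: Dl1' zero_le_power2 u_def[symmetric]) (simp add: psi_def e algebra_simps diff_divide_distrib add_divide_distrib)
qed




lemma u_neg: "u (- x) = u x" unfolding u_def by simp
lemma psi_swap: "psi Z P (y - x) = - psi Z P (x - y)"
  unfolding psi_def using u_sym[of y x] by (simp add: algebra_simps diff_divide_distrib add_divide_distrib)

lemma u_le1: "u x \<le> 1" unfolding u_def by (smt (verit) zero_le_power2 divide_le_eq_1)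
lemma absx_u: "\<bar>x\<bar> * u x \<le> 1/2"
proof -
  have "0 \<le> (\<bar>x\<bar> - 1)^2" by simp
  then have "2*\<bar>x\<bar> \<le> 1 + x^2" by (simp add: power2_eq_square algebra_simps abs_mult_self_eq)
  then show ?thesis unfolding u_def by (simp add: field_simps add_pos_nonneg)
qed
lemma x2_u: "x^2 * u x \<le> 1" unfolding u_def by (simp add: field_simps add_pos_nonneg)

lemma F_lip: "\<bar>u x * x - u y * y\<bar> \<le> \<bar>x - y\<bar>"
proof -
  have ux: "u x = 1/(1+x^2)" and uy: "u y = 1/(1+y^2)" by (simp_all add: u_def)
  have px: "1 + x^2 > 0" and py: "1+y^2 > 0" by (simp_all add: add_pos_nonneg)
  have e: "u x * x - u y * y = (x - y) * (1 - x*y) * u x * u y"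
    unfolding ux uy using px py by (simp add: field_simps power2_eq_square)
  have "\<bar>1 - x*y\<bar> \<le> (1+x^2)*(1+y^2)"
  proof -
    have "\<bar>1 - x*y\<bar> \<le> 1 + \<bar>x*y\<bar>" by simp
    also have "\<bar>x*y\<bar> \<le> x^2 * y^2 + x^2 + y^2"
    proof -
      have "0 \<le> (\<bar>x\<bar> - \<bar>y\<bar>)^2" by simp
      then have "2*\<bar>x*y\<bar> \<le> x^2 + y^2" by (simp add: power2_eq_square algebra_simps abs_mult abs_mult_self_eq)
      moreover have "0 \<le> x^2*y^2" by simp
      ultimately show ?thesis by linarith
    qed
    finally show ?thesis by (simp add: algebra_simps)
  qed
  then have "\<bar>1 - x*y\<bar> * u x * u y \<le> 1"
  proof -
    assume h: "\<bar>1 - x*y\<bar> \<le> (1+x^2)*(1+y^2)"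
    have "\<bar>1 - x*y\<bar> * u x * u y = \<bar>1 - x*y\<bar> / ((1+x^2)*(1+y^2))" unfolding ux uy by simp
    also have "... \<le> 1" using h px py by (simp add: divide_le_eq_1_pos)
    finally show ?thesis .
  qed
  then have "\<bar>x - y\<bar> * (\<bar>1 - x*y\<bar> * u x * u y) \<le> \<bar>x - y\<bar>"
    by (simp add: mult_left_le)
  then show ?thesis unfolding e using u_pos[of x] u_pos[of y] by (simp add: abs_mult mult.assoc)
qed

lemma tri3: "\<bar>a\<bar> \<le> A \<Longrightarrow> \<bar>b\<bar> \<le> B \<Longrightarrow> \<bar>c\<bar> \<le> C \<Longrightarrow> \<bar>a + b - c\<bar> \<le> A + B + (C::real)"
  by arith

lemma aux3: "X \<le> d/2 + 5/8*d + d \<Longrightarrow> 0 \<le> d \<Longrightarrow> X \<le> 3*(d::real)" by linarith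

lemma u_diff: "u x - u y = (y - x) * (y + x) * u x * u y"
proof -
  have px: "1 + x^2 > 0" and py: "1+y^2 > 0" by (simp_all add: add_pos_nonneg)
  show ?thesis unfolding u_def using px py by (simp add: field_simps power2_eq_square)
qed

lemma psi_lip:
  assumes zx: "2*u x \<le> Z" and zy: "2*u y \<le> Z" and P: "0 \<le> P" "P \<le> 1"
  shows "\<bar>psi Z P x - psi Z P y\<bar> \<le> 3*\<bar>x - y\<bar>"
proof -
  have Z: "Z > 0" using u_pos[of x] zx by linarith
  define Fx where "Fx = u x * x"
  define Fy where "Fy = u y * y"
  have e: "psi Z P x - psi Z P y = (u x * (Fx - Fy))/Z + (Fy*(u x - u y))/Z - P*(Fx - Fy)"
    unfolding psi_def Fx_def Fy_def by (simp add: algebra_simps diff_divide_distrib add_divide_distrib)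
  have F: "\<bar>Fx - Fy\<bar> \<le> \<bar>x - y\<bar>" unfolding Fx_def Fy_def by (rule F_lip)
  have b1: "\<bar>(u x * (Fx - Fy))/Z\<bar> \<le> \<bar>x - y\<bar>/2"
  proof -
    have "\<bar>(u x * (Fx - Fy))/Z\<bar> = (u x / Z) * \<bar>Fx - Fy\<bar>" using Z u_pos[of x] by (simp add: abs_mult)
    also have "... \<le> (1/2) * \<bar>x - y\<bar>"
    proof (rule mult_mono)
      show "u x / Z \<le> 1/2" using Z zx by (simp add: divide_le_eq)
    qed (use F Z u_pos[of x] in auto)
    finally show ?thesis by simp
  qed
  have b2: "\<bar>Fy*(u x - u y)\<bar> \<le> (5/4) * u y * \<bar>x - y\<bar>"
  proof -
    have "\<bar>Fy*(u x - u y)\<bar> = u y * \<bar>x - y\<bar> * (\<bar>y\<bar> * \<bar>y + x\<bar> * u x * u y)"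
      unfolding Fy_def u_diff using u_pos[of x] u_pos[of y] by (simp add: abs_mult abs_minus_commute)
    also have "... \<le> u y * \<bar>x - y\<bar> * (5/4)"
    proof (rule mult_left_mono)
      have "\<bar>y\<bar> * \<bar>y + x\<bar> \<le> \<bar>x\<bar>*\<bar>y\<bar> + y^2"
      proof -
        have "\<bar>y\<bar> * \<bar>y + x\<bar> \<le> \<bar>y\<bar> * (\<bar>y\<bar> + \<bar>x\<bar>)"
          by (rule mult_left_mono) (auto simp: abs_triangle_ineq)
        then show ?thesis by (simp add: power2_eq_square algebra_simps abs_mult_self_eq)
      qed
      then have "\<bar>y\<bar> * \<bar>y + x\<bar> * u x * u y \<le> (\<bar>x\<bar>*\<bar>y\<bar> + y^2) * u x * u y"
        using u_pos[of x] u_pos[of y] by (simp add: mult_right_mono)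
      also have "... = (\<bar>x\<bar> * u x) * (\<bar>y\<bar> * u y) + (y^2 * u y) * u x" by (simp add: algebra_simps)
      also have "... \<le> (1/2)*(1/2) + 1 * 1"
      proof (rule add_mono)
        show "(\<bar>x\<bar> * u x) * (\<bar>y\<bar> * u y) \<le> (1/2)*(1/2)"
          by (rule mult_mono) (use absx_u[of x] absx_u[of y] u_pos[of y] in auto)
        show "(y^2 * u y) * u x \<le> 1 * 1"
          by (rule mult_mono) (use x2_u[of y] u_le1[of x] u_pos[of x] in auto)
      qed
      finally show "\<bar>y\<bar> * \<bar>y + x\<bar> * u x * u y \<le> 5/4" by simp
    qed (use u_pos[of y] in auto)
    finally show ?thesis by (simp add: algebra_simps)
  qed
  have b2': "\<bar>(Fy*(u x - u y))/Z\<bar> \<le> (5/8) * \<bar>x - y\<bar>"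
  proof -
    have "\<bar>(Fy*(u x - u y))/Z\<bar> = \<bar>Fy*(u x - u y)\<bar> / Z" using Z by simp
    also have "... \<le> ((5/4) * u y * \<bar>x - y\<bar>) / Z" by (rule divide_right_mono) (use b2 Z in auto)
    also have "... = (5/4) * \<bar>x - y\<bar> * (u y / Z)" by simp
    also have "... \<le> (5/4) * \<bar>x - y\<bar> * (1/2)"
      by (rule mult_left_mono) (use Z zy in \<open>auto simp: divide_le_eq\<close>)
    finally show ?thesis by simp
  qed
  have b3: "\<bar>P*(Fx - Fy)\<bar> \<le> \<bar>x - y\<bar>"
  proof -
    have "\<bar>P*(Fx - Fy)\<bar> = P * \<bar>Fx - Fy\<bar>" using P by (simp add: abs_mult)
    also have "... \<le> 1 * \<bar>x - y\<bar>" by (rule mult_mono) (use P F in auto)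
    finally show ?thesis by simp
  qed
  have "\<bar>psi Z P x - psi Z P y\<bar> \<le> \<bar>x - y\<bar>/2 + (5/8) * \<bar>x - y\<bar> + \<bar>x - y\<bar>"
    unfolding e by (rule tri3[OF b1 b2' b3])
  moreover have "\<bar>x - y\<bar> \<ge> 0" by simp
  ultimately show ?thesis by (rule aux3)
qed




lemma key1:
  fixes x :: real
  shows "x * (4 * (psi (Z1 (-x) 0 x) (1/50) (x - - x) + psi (Z1 (-x) 0 x) (6/25) (x - 0))) \<ge> x^2 * u x * u (2*x) / 6"
proof -
  define U1 where "U1 = u x"
  define U3 where "U3 = u (2*x)"
  define Z where "Z = Z1 (-x) 0 x"
  have p1: "U1 > 0" and p3: "U3 > 0" unfolding U1_def U3_def by (simp_all add: u_pos)
  have Zeq: "Z = 4*U1 + 2*U3"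
  proof -
    have "u (-x - 0) = U1" "u (0 - x) = U1" "u (- x - x) = U3" unfolding U1_def U3_def u_def
      by (simp_all add: power2_eq_square algebra_simps)
    then show ?thesis unfolding Z_def Z1_def by simp
  qed
  have Zp: "Z > 0" using Zeq p1 p3 by simp
  have rel: "2*U3 - U1/2 = (3/2)*U1*U3"
  proof -
    have a: "1 + x^2 > 0" "1 + 4*x^2 > 0" by (simp_all add: add_pos_nonneg)
    show ?thesis unfolding U1_def U3_def u_def using a by (simp add: field_simps power2_eq_square)
  qed
  have le4: "U1 \<le> 4*U3"
  proof -
    have a: "1 + x^2 > 0" "1 + 4*x^2 > 0" by (simp_all add: add_pos_nonneg)
    show ?thesis unfolding U1_def U3_def u_def using a by (simp add: field_simps power2_eq_square)
  qed
  define q where "q = U3 / Z"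
  have q1: "U1 / Z = (1 - 2*q)/4" unfolding q_def using Zeq Zp by (simp add: field_simps)
  have qge: "q \<ge> 1/18"
  proof -
    have "Z \<le> 18 * U3" using Zeq le4 by simp
    then show ?thesis unfolding q_def using Zp p3 by (simp add: field_simps)
  qed
  have ex: "x - - x = 2*x" "x - 0 = x" by simp_all
  have "x * (4 * (psi Z (1/50) (2*x) + psi Z (6/25) x)) = 4*x^2*((q - 1/50)*(2*U3) + ((1-2*q)/4 - 6/25)*U1)"
    unfolding psi_def U1_def[symmetric] U3_def[symmetric] q_def[symmetric] q1
    by (simp add: power2_eq_square field_simps)
  also have "... = 4*x^2*(q - 1/50)*(2*U3 - U1/2)" by (simp add: field_simps)
  also have "... = 6*x^2*(q - 1/50)*U1*U3" unfolding rel by simp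
  also have "... \<ge> 6*x^2*(1/18 - 1/50)*U1*U3"
  proof -
    have "0 \<le> 6*x^2*U1*U3" using p1 p3 by simp
    then have "6*x^2*U1*U3 * (1/18 - 1/50) \<le> 6*x^2*U1*U3 * (q - 1/50)"
      using qge by (intro mult_left_mono) auto
    then show ?thesis by (simp add: algebra_simps)
  qed
  finally have "x * (4 * (psi Z (1/50) (2*x) + psi Z (6/25) x)) \<ge> 6*x^2*(1/18 - 1/50)*U1*U3" .
  moreover have "6*x^2*(1/18 - 1/50)*U1*U3 \<ge> x^2 * U1 * U3 / 6"
  proof -
    have "0 \<le> x^2*U1*U3" using p1 p3 by simp
    then show ?thesis by (simp add: algebra_simps)
  qed
  ultimately show ?thesis unfolding ex Z_def[symmetric] U1_def[symmetric] U3_def[symmetric] by linarith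
qed

lemma quart: "x^2 \<ge> 1 \<Longrightarrow> x^4 * u x * u (2*x) \<ge> 1/10"
proof -
  assume h: "x^2 \<ge> 1"
  have a: "1 + x^2 > 0" "1 + 4*x^2 > 0" by (simp_all add: add_pos_nonneg)
  have "x^4 * u x * u (2*x) = x^4 / ((1+x^2)*(1+4*x^2))" unfolding u_def by (simp add: power2_eq_square)
  moreover have "(1+x^2)*(1+4*x^2) \<le> 10 * x^4"
  proof -
    have "0 \<le> (6*x^2+1)*(x^2-1)" using h by simp
    then show ?thesis by (simp add: algebra_simps power2_eq_square power4_eq_xxxx)
  qed
  moreover have D: "0 < (1+x^2)*(1+4*x^2)" using a by simp
  ultimately show ?thesis by (simp add: le_divide_eq)
qed




lemma mono0:
  fixes f f' :: "real \<Rightarrow> real"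
  assumes d: "\<And>t. t \<ge> 0 \<Longrightarrow> (f has_real_derivative f' t) (at t within {0..})"
    and n: "\<And>t. t \<ge> 0 \<Longrightarrow> f' t \<le> 0" and t: "t \<ge> 0"
  shows "f t \<le> f 0"
proof -
  have c: "continuous_on {0..t} f"
    by (rule continuous_on_subset[OF DERIV_continuous_on[of "{0..}" f f']]) (use d in auto)
  show ?thesis
  proof (rule DERIV_nonpos_imp_decreasing_open[OF t _ c])
    fix x :: real assume x: "0 < x" "x < t"
    have "interior {0::real..} = {0<..}" by simp
    then have "at x within {0..} = at x" using x by (intro at_within_interior) auto
    then show "\<exists>y. DERIV f x :> y \<and> y \<le> 0" using d[of x] n[of x] x by auto
  qed
qed

lemma diam_ge:
  assumes "i \<in> {1..n}" "j \<in> {1..n}"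
  shows "\<bar>Yc i 1 - Yc j 1\<bar> \<le> diam_conf 1 n Yc"
proof -
  have e: "\<bar>Yc i 1 - Yc j 1\<bar> = sqrt (sqd 1 (Yc i) (Yc j))" unfolding sqd1 by simp
  have fin: "finite {sqrt (sqd 1 (Yc i) (Yc j)) | i j. i \<in> {1..n} \<and> j \<in> {1..n}}"
    by (rule finite_image_set2) auto
  show ?thesis unfolding e diam_conf_def
    by (rule Max_ge[OF fin]) (use assms in blast)
qed

lemma powr_quarter:
  assumes t: "(t::real) \<ge> 0" and y: "y \<ge> 0" and h: "y^4 \<ge> t"
  shows "t powr (1/4) \<le> y"
proof (rule ccontr)
  assume "\<not> ?thesis"
  then have lt: "y < t powr (1/4)" by simp
  then have tp: "t > 0" using t y by (cases "t = 0") auto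
  have "y^4 < (t powr (1/4))^4" by (rule power_strict_mono[OF lt]) (use y in auto)
  also have "(t powr (1/4))^4 = t" using tp by (simp add: powr_power)
  finally show False using h by simp
qed




lemma part1:
  assumes sol: "is_flow_solution (\<lambda>x. 1 / (1 + x)) 1 3 pp Yinit Y" and t: "t \<ge> 0"
  shows "diam_conf 1 3 (Y t) \<ge> 1 * t powr (1/4)"
proof -
  define a where "a = (\<lambda>\<sigma>. Y \<sigma> 1 1)"
  define b where "b = (\<lambda>\<sigma>. Y \<sigma> 2 1)"
  define c where "c = (\<lambda>\<sigma>. Y \<sigma> 3 1)"
  define Z where "Z = (\<lambda>\<sigma>. Z1 (a \<sigma>) (b \<sigma>) (c \<sigma>))"
  have init: "a 0 = -1" "b 0 = 0" "c 0 = 1"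
    using sol unfolding is_flow_solution_def Yinit_def a_def b_def c_def by auto
  have der: "\<And>\<sigma> i. \<sigma> \<ge> 0 \<Longrightarrow> i \<in> {1..3} \<Longrightarrow>
     ((\<lambda>\<tau>. Y \<tau> i 1) has_real_derivative flow_rhs (\<lambda>x. 1 / (1 + x)) 1 3 pp (Y \<sigma>) i 1) (at \<sigma> within {0..})"
    using sol unfolding is_flow_solution_def by auto
  have da: "\<And>\<sigma>. \<sigma> \<ge> 0 \<Longrightarrow> (a has_real_derivative
      4 * (psi (Z \<sigma>) (6/25) (a \<sigma> - b \<sigma>) + psi (Z \<sigma>) (1/50) (a \<sigma> - c \<sigma>))) (at \<sigma> within {0..})"
    using der[of _ 1] rhs1(1) unfolding a_def b_def c_def Z_def by simp
  have db: "\<And>\<sigma>. \<sigma> \<ge> 0 \<Longrightarrow> (b has_real_derivative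
      4 * (psi (Z \<sigma>) (6/25) (b \<sigma> - a \<sigma>) + psi (Z \<sigma>) (6/25) (b \<sigma> - c \<sigma>))) (at \<sigma> within {0..})"
    using der[of _ 2] rhs1(2) unfolding a_def b_def c_def Z_def by simp
  have dc: "\<And>\<sigma>. \<sigma> \<ge> 0 \<Longrightarrow> (c has_real_derivative
      4 * (psi (Z \<sigma>) (1/50) (c \<sigma> - a \<sigma>) + psi (Z \<sigma>) (6/25) (c \<sigma> - b \<sigma>))) (at \<sigma> within {0..})"
    using der[of _ 3] rhs1(3) unfolding a_def b_def c_def Z_def by simp
  have dg: "\<And>\<sigma>. \<sigma> \<ge> 0 \<Longrightarrow> ((\<lambda>\<tau>. a \<tau> + b \<tau> + c \<tau>) has_real_derivative 0) (at \<sigma> within {0..})"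
  proof -
    fix \<sigma> :: real assume s: "\<sigma> \<ge> 0"
    have "((\<lambda>\<tau>. a \<tau> + b \<tau> + c \<tau>) has_real_derivative
      4 * (psi (Z \<sigma>) (6/25) (a \<sigma> - b \<sigma>) + psi (Z \<sigma>) (1/50) (a \<sigma> - c \<sigma>)) +
      4 * (psi (Z \<sigma>) (6/25) (b \<sigma> - a \<sigma>) + psi (Z \<sigma>) (6/25) (b \<sigma> - c \<sigma>)) +
      4 * (psi (Z \<sigma>) (1/50) (c \<sigma> - a \<sigma>) + psi (Z \<sigma>) (6/25) (c \<sigma> - b \<sigma>))) (at \<sigma> within {0..})"
      by (intro DERIV_add da db dc s)
    moreover have "4 * (psi (Z \<sigma>) (6/25) (a \<sigma> - b \<sigma>) + psi (Z \<sigma>) (1/50) (a \<sigma> - c \<sigma>)) +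
      4 * (psi (Z \<sigma>) (6/25) (b \<sigma> - a \<sigma>) + psi (Z \<sigma>) (6/25) (b \<sigma> - c \<sigma>)) +
      4 * (psi (Z \<sigma>) (1/50) (c \<sigma> - a \<sigma>) + psi (Z \<sigma>) (6/25) (c \<sigma> - b \<sigma>)) = 0"
      using psi_swap[of "Z \<sigma>" "6/25" "b \<sigma>" "a \<sigma>"] psi_swap[of "Z \<sigma>" "1/50" "c \<sigma>" "a \<sigma>"]
        psi_swap[of "Z \<sigma>" "6/25" "c \<sigma>" "b \<sigma>"] by simp
    ultimately show "((\<lambda>\<tau>. a \<tau> + b \<tau> + c \<tau>) has_real_derivative 0) (at \<sigma> within {0..})" by simp
  qed
  have com: "\<And>\<sigma>. \<sigma> \<ge> 0 \<Longrightarrow> a \<sigma> + b \<sigma> + c \<sigma> = 0"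
  proof -
    fix \<sigma> :: real assume s: "\<sigma> \<ge> 0"
    have "a \<sigma> + b \<sigma> + c \<sigma> \<le> a 0 + b 0 + c 0"
      by (rule mono0[where f = "\<lambda>\<tau>. a \<tau> + b \<tau> + c \<tau>" and f' = "\<lambda>_. 0"]) (use dg s in auto)
    moreover have "-(a \<sigma> + b \<sigma> + c \<sigma>) \<le> -(a 0 + b 0 + c 0)"
      by (rule mono0[where f = "\<lambda>\<tau>. -(a \<tau> + b \<tau> + c \<tau>)" and f' = "\<lambda>_. 0"])
         (use dg[THEN DERIV_minus] s in auto)
    ultimately show "a \<sigma> + b \<sigma> + c \<sigma> = 0" using init by simp
  qed
  \<comment> \<open>symmetry: b stays 0\<close>
  have bbound: "\<And>\<sigma>. \<sigma> \<ge> 0 \<Longrightarrow>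
     \<bar>4 * (psi (Z \<sigma>) (6/25) (b \<sigma> - a \<sigma>) + psi (Z \<sigma>) (6/25) (b \<sigma> - c \<sigma>))\<bar> \<le> 36 * \<bar>b \<sigma>\<bar>"
  proof -
    fix \<sigma> :: real assume s: "\<sigma> \<ge> 0"
    have z1: "2 * u (b \<sigma> - a \<sigma>) \<le> Z \<sigma>" and z2: "2 * u (c \<sigma> - b \<sigma>) \<le> Z \<sigma>"
      unfolding Z_def Z1_def using u_pos[of "a \<sigma> - c \<sigma>"] u_pos[of "b \<sigma> - c \<sigma>"] u_pos[of "a \<sigma> - b \<sigma>"]
        u_sym[of "b \<sigma>" "a \<sigma>"] u_sym[of "c \<sigma>" "b \<sigma>"] by auto
    have "\<bar>psi (Z \<sigma>) (6/25) (b \<sigma> - a \<sigma>) - psi (Z \<sigma>) (6/25) (c \<sigma> - b \<sigma>)\<bar> \<le> 3 * \<bar>(b \<sigma> - a \<sigma>) - (c \<sigma> - b \<sigma>)\<bar>"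
      by (rule psi_lip[OF z1 z2]) auto
    also have "(b \<sigma> - a \<sigma>) - (c \<sigma> - b \<sigma>) = 3 * b \<sigma>" using com[OF s] by simp
    finally have "\<bar>psi (Z \<sigma>) (6/25) (b \<sigma> - a \<sigma>) - psi (Z \<sigma>) (6/25) (c \<sigma> - b \<sigma>)\<bar> \<le> 9 * \<bar>b \<sigma>\<bar>" by (simp add: abs_mult)
    then show "\<bar>4 * (psi (Z \<sigma>) (6/25) (b \<sigma> - a \<sigma>) + psi (Z \<sigma>) (6/25) (b \<sigma> - c \<sigma>))\<bar> \<le> 36 * \<bar>b \<sigma>\<bar>"
      using psi_swap[of "Z \<sigma>" "6/25" "b \<sigma>" "c \<sigma>"] by (simp add: abs_mult)
  qed
  have bzero: "\<And>\<sigma>. \<sigma> \<ge> 0 \<Longrightarrow> b \<sigma> = 0"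
  proof -
    fix \<sigma> :: real assume s: "\<sigma> \<ge> 0"
    define D where "D = (\<lambda>\<sigma>. 4 * (psi (Z \<sigma>) (6/25) (b \<sigma> - a \<sigma>) + psi (Z \<sigma>) (6/25) (b \<sigma> - c \<sigma>)))"
    have dh: "\<And>\<tau>. \<tau> \<ge> 0 \<Longrightarrow> ((\<lambda>\<tau>. (b \<tau>)^2 * exp (-72 * \<tau>)) has_real_derivative
        (2 * b \<tau> * D \<tau> * exp (-72 * \<tau>) - 72 * (b \<tau>)^2 * exp (-72 * \<tau>))) (at \<tau> within {0..})"
      using db unfolding D_def by (auto intro!: derivative_eq_intros simp: algebra_simps)
    have nh: "\<And>\<tau>. \<tau> \<ge> 0 \<Longrightarrow> 2 * b \<tau> * D \<tau> * exp (-72 * \<tau>) - 72 * (b \<tau>)^2 * exp (-72 * \<tau>) \<le> 0"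
    proof -
      fix \<tau> :: real assume "\<tau> \<ge> 0"
      then have "\<bar>D \<tau>\<bar> \<le> 36 * \<bar>b \<tau>\<bar>" unfolding D_def by (rule bbound)
      then have "\<bar>b \<tau>\<bar> * \<bar>D \<tau>\<bar> \<le> \<bar>b \<tau>\<bar> * (36 * \<bar>b \<tau>\<bar>)" by (rule mult_left_mono) simp
      moreover have "b \<tau> * D \<tau> \<le> \<bar>b \<tau>\<bar> * \<bar>D \<tau>\<bar>" by (metis abs_ge_self abs_mult)
      moreover have "\<bar>b \<tau>\<bar> * (36 * \<bar>b \<tau>\<bar>) = 36 * (b \<tau>)^2" by (simp add: power2_eq_square abs_mult_self_eq)
      ultimately have "b \<tau> * D \<tau> \<le> 36 * (b \<tau>)^2" by linarith
      then have "2 * b \<tau> * D \<tau> - 72 * (b \<tau>)^2 \<le> 0" by (simp add: mult.commute)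
      then have "(2 * b \<tau> * D \<tau> - 72 * (b \<tau>)^2) * exp (-72 * \<tau>) \<le> 0"
        by (simp add: mult_nonpos_nonneg)
      then show "2 * b \<tau> * D \<tau> * exp (-72 * \<tau>) - 72 * (b \<tau>)^2 * exp (-72 * \<tau>) \<le> 0"
        by (simp add: algebra_simps)
    qed
    have "(b \<sigma>)^2 * exp (-72 * \<sigma>) \<le> (b 0)^2 * exp (-72 * 0)"
      by (rule mono0[where f = "\<lambda>\<tau>. (b \<tau>)^2 * exp (-72 * \<tau>)", OF dh nh s])
    then have "(b \<sigma>)^2 * exp (-72 * \<sigma>) \<le> 0" using init by simp
    then have "(b \<sigma>)^2 \<le> 0" by (simp add: mult_le_0_iff)
    then show "b \<sigma> = 0" by simp
  qed
  have dc2: "\<And>\<sigma>. \<sigma> \<ge> 0 \<Longrightarrow> (c has_real_derivative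
      4 * (psi (Z1 (- c \<sigma>) 0 (c \<sigma>)) (1/50) (c \<sigma> - - c \<sigma>) + psi (Z1 (- c \<sigma>) 0 (c \<sigma>)) (6/25) (c \<sigma> - 0))) (at \<sigma> within {0..})"
  proof -
    fix \<sigma> :: real assume s: "\<sigma> \<ge> 0"
    have "a \<sigma> = - c \<sigma>" "b \<sigma> = 0" using com[OF s] bzero[OF s] by simp_all
    then show "?thesis \<sigma>" using dc[OF s] unfolding Z_def by simp
  qed
  define K where "K = (\<lambda>\<sigma>. 4 * (psi (Z1 (- c \<sigma>) 0 (c \<sigma>)) (1/50) (c \<sigma> - - c \<sigma>) + psi (Z1 (- c \<sigma>) 0 (c \<sigma>)) (6/25) (c \<sigma> - 0)))"
  have kk: "\<And>\<sigma>. c \<sigma> * K \<sigma> \<ge> (c \<sigma>)^2 * u (c \<sigma>) * u (2 * c \<sigma>) / 6"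
    unfolding K_def by (rule key1)
  have kpos: "\<And>\<sigma>. c \<sigma> * K \<sigma> \<ge> 0"
  proof -
    fix \<sigma> show "c \<sigma> * K \<sigma> \<ge> 0" using kk[of \<sigma>] u_pos[of "c \<sigma>"] u_pos[of "2 * c \<sigma>"]
      by (smt (verit) divide_nonneg_pos mult_nonneg_nonneg zero_le_power2)
  qed
  have csq: "\<And>\<sigma>. \<sigma> \<ge> 0 \<Longrightarrow> (c \<sigma>)^2 \<ge> 1"
  proof -
    fix \<sigma> :: real assume s: "\<sigma> \<ge> 0"
    have "- ((c \<sigma>)^2) \<le> - ((c 0)^2)"
    proof (rule mono0[where f = "\<lambda>\<tau>. - ((c \<tau>)^2)" and f' = "\<lambda>\<tau>. - (2 * (c \<tau> * K \<tau>))"])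
      show "((\<lambda>\<tau>. - ((c \<tau>)^2)) has_real_derivative - (2 * (c \<tau> * K \<tau>))) (at \<tau> within {0..})" if "\<tau> \<ge> 0" for \<tau>
        using dc2[OF that] unfolding K_def by (auto intro!: derivative_eq_intros simp: algebra_simps)
      show "- (2 * (c \<tau> * K \<tau>)) \<le> 0" for \<tau> using kpos[of \<tau>] by simp
    qed (use s in auto)
    then show "(c \<sigma>)^2 \<ge> 1" using init by simp
  qed
  have c4: "\<sigma> / 15 - (c \<sigma>)^4 \<le> 0 / 15 - (c 0)^4" if s: "\<sigma> \<ge> 0" for \<sigma>
  proof (rule mono0[where f = "\<lambda>\<tau>. \<tau> / 15 - (c \<tau>)^4" and f' = "\<lambda>\<tau>. 1/15 - 4 * (c \<tau>)^2 * (c \<tau> * K \<tau>)"])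
    show "((\<lambda>\<tau>. \<tau> / 15 - (c \<tau>)^4) has_real_derivative 1/15 - 4 * (c \<tau>)^2 * (c \<tau> * K \<tau>)) (at \<tau> within {0..})"
      if "\<tau> \<ge> 0" for \<tau>
      using dc2[OF that] unfolding K_def
      by (auto intro!: derivative_eq_intros simp: algebra_simps power2_eq_square power3_eq_cube)
    show "1/15 - 4 * (c \<tau>)^2 * (c \<tau> * K \<tau>) \<le> 0" if "\<tau> \<ge> 0" for \<tau>
    proof -
      have "4 * (c \<tau>)^2 * ((c \<tau>)^2 * u (c \<tau>) * u (2 * c \<tau>) / 6) \<le> 4 * (c \<tau>)^2 * (c \<tau> * K \<tau>)"
        by (rule mult_left_mono[OF kk]) simp
      moreover have "4 * (c \<tau>)^2 * ((c \<tau>)^2 * u (c \<tau>) * u (2 * c \<tau>) / 6) = (2/3) * ((c \<tau>)^4 * u (c \<tau>) * u (2 * c \<tau>))"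
        by (simp add: power2_eq_square power4_eq_xxxx)
      moreover have "(c \<tau>)^4 * u (c \<tau>) * u (2 * c \<tau>) \<ge> 1/10" by (rule quart[OF csq[OF that]])
      ultimately show ?thesis by linarith
    qed
  qed (use s in auto)
  have "(c t)^4 \<ge> 1 + t / 15" using c4[OF t] init by simp
  moreover have "(2 * \<bar>c t\<bar>)^4 = 16 * (c t)^4" by (simp add: power_mult_distrib)
  ultimately have "(2 * \<bar>c t\<bar>)^4 \<ge> t" using t by simp
  then have p: "t powr (1/4) \<le> 2 * \<bar>c t\<bar>" by (intro powr_quarter[OF t]) simp_all
  have "\<bar>Y t 3 1 - Y t 1 1\<bar> \<le> diam_conf 1 3 (Y t)" by (rule diam_ge) auto
  moreover have "Y t 3 1 - Y t 1 1 = 2 * c t" using com[OF t] bzero[OF t] unfolding a_def b_def c_def by simp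
  ultimately show ?thesis using p by (simp add: abs_mult)
qed



definition "w x = exp (- (x^2::real))"
definition "Z2 A B C = 2 * (w (A-B) + w (A-C) + w (B-C))"
definition "phi Z P x = (w x / Z - P) * (x::real)"

lemma w_pos: "w x > 0" unfolding w_def by simp

lemma rhs2:
  fixes Yc :: "nat \<Rightarrow> nat \<Rightarrow> real"
  defines "A \<equiv> Yc 1 1" and "B \<equiv> Yc 2 1" and "C \<equiv> Yc 3 1"
  shows "flow_rhs (\<lambda>x. exp (- x)) 1 3 pp Yc 1 1 = 4 * (phi (Z2 A B C) (6/25) (A-B) + phi (Z2 A B C) (1/50) (A-C))"
    and "flow_rhs (\<lambda>x. exp (- x)) 1 3 pp Yc 2 1 = 4 * (phi (Z2 A B C) (6/25) (B-A) + phi (Z2 A B C) (6/25) (B-C))"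
    and "flow_rhs (\<lambda>x. exp (- x)) 1 3 pp Yc 3 1 = 4 * (phi (Z2 A B C) (1/50) (C-A) + phi (Z2 A B C) (6/25) (C-B))"
proof -
  have Z: "exp (- (A - B)\<^sup>2) + exp (- (A - C)\<^sup>2) + exp (- (B - A)\<^sup>2) + exp (- (B - C)\<^sup>2) +
           exp (- (C - A)\<^sup>2) + exp (- (C - B)\<^sup>2) = Z2 A B C"
    unfolding Z2_def w_def by (simp add: power2_commute)
  have e: "w (B - A) = w (A - B)" "w (C - A) = w (A - C)" "w (C - B) = w (B - C)"
    by (simp_all add: w_def power2_commute)
  show "flow_rhs (\<lambda>x. exp (- x)) 1 3 pp Yc 1 1 = 4 * (phi (Z2 A B C) (6/25) (A-B) + phi (Z2 A B C) (1/50) (A-C))"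
    unfolding rhs_gen A_def[symmetric] B_def[symmetric] C_def[symmetric] pp_vals Z Dl2
    by (simp only: w_def[symmetric]) (simp add: phi_def e algebra_simps diff_divide_distrib add_divide_distrib)
  show "flow_rhs (\<lambda>x. exp (- x)) 1 3 pp Yc 2 1 = 4 * (phi (Z2 A B C) (6/25) (B-A) + phi (Z2 A B C) (6/25) (B-C))"
    unfolding rhs_gen A_def[symmetric] B_def[symmetric] C_def[symmetric] pp_vals Z Dl2
    by (simp only: w_def[symmetric]) (simp add: phi_def e algebra_simps diff_divide_distrib add_divide_distrib)
  show "flow_rhs (\<lambda>x. exp (- x)) 1 3 pp Yc 3 1 = 4 * (phi (Z2 A B C) (1/50) (C-A) + phi (Z2 A B C) (6/25) (C-B))"
    unfolding rhs_gen A_def[symmetric] B_def[symmetric] C_def[symmetric] pp_vals Z Dl2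
    by (simp only: w_def[symmetric]) (simp add: phi_def e algebra_simps diff_divide_distrib add_divide_distrib)
qed

lemma alg2:
  fixes A B C q1 q2 q3 al ga :: real
  defines "Sa \<equiv> 4 * ((q1 - al) * (A-B) + (q2 - ga) * (A-C))"
    and "Sb \<equiv> 4 * ((q1 - al) * (B-A) + (q3 - al) * (B-C))"
    and "Sc \<equiv> 4 * ((q2 - ga) * (C-A) + (q3 - al) * (C-B))"
  shows "4 * ((al - q1) * (A-B) * (Sa - Sb) + (ga - q2) * (A-C) * (Sa - Sc) + (al - q3) * (B-C) * (Sb - Sc))
     = - (Sa^2 + Sb^2 + Sc^2)"
  unfolding Sa_def Sb_def Sc_def power2_eq_square by algebra

lemma exp_bound: "4 * exp (-1) + 2 * exp (-4) < 6 * exp (- (113/100::real))"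
proof -
  have e1: "exp (-1::real) = exp (-(113/100)) * exp (13/100)" by (simp flip: exp_add)
  have e4: "exp (-4::real) = exp (-(113/100)) * exp (-(287/100))" by (simp flip: exp_add)
  have a: "exp (13/100::real) \<le> 100/87"
  proof -
    have "87/100 \<le> exp (-(13/100::real))" using exp_ge_add_one_self[of "-(13/100)"] by simp
    then have "inverse (exp (-(13/100::real))) \<le> inverse (87/100)" by (rule le_imp_inverse_le) simp
    then show ?thesis by (simp add: exp_minus)
  qed
  have b: "exp (-(287/100::real)) \<le> 100/387"
  proof -
    have "387/100 \<le> exp (287/100::real)" using exp_ge_add_one_self[of "287/100"] by simp
    then have "inverse (exp (287/100::real)) \<le> inverse (387/100)" by (rule le_imp_inverse_le) simp
    then show ?thesis by (simp add: exp_minus)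
  qed
  have "4 * exp (13/100::real) + 2 * exp (-(287/100)) < 6" using a b by simp
  then have "exp (-(113/100)) * (4 * exp (13/100::real) + 2 * exp (-(287/100))) < exp (-(113/100)) * 6"
    by (intro mult_strict_left_mono) auto
  then show ?thesis unfolding e1 e4 by (simp add: algebra_simps)
qed




lemma six: "(X::real) < P \<Longrightarrow> X < Q \<Longrightarrow> X < R \<Longrightarrow> 6 * X < 2 * (P + Q + R)" by (simp add: algebra_simps)

lemma dEalg:
  fixes Z W1 W2 W3 x1 x2 x3 d1 d2 d3 :: real
  assumes "Z > 0"
  shows "2 * ((6/25) * (2*x1*d1) + (1/50) * (2*x2*d2) + (6/25) * (2*x3*d3)) +
     1 / Z * (2 * (W1 * (- (2*x1*d1)) + W2 * (- (2*x2*d2)) + W3 * (- (2*x3*d3)))) =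
     4 * ((6/25 - W1 / Z) * x1 * d1 + (1/50 - W2 / Z) * x2 * d2 + (6/25 - W3 / Z) * x3 * d3)"
  using assms by (simp add: field_simps)

lemma part2:
  assumes sol: "is_flow_solution (\<lambda>x. exp (- x)) 1 3 pp Yinit Y" and t: "t \<ge> 0"
  shows "diam_conf 1 3 (Y t) \<ge> 1/10"
proof -
  define a where "a = (\<lambda>\<sigma>. Y \<sigma> 1 1)"
  define b where "b = (\<lambda>\<sigma>. Y \<sigma> 2 1)"
  define c where "c = (\<lambda>\<sigma>. Y \<sigma> 3 1)"
  define Z where "Z = (\<lambda>\<sigma>. Z2 (a \<sigma>) (b \<sigma>) (c \<sigma>))"
  define Sa where "Sa = (\<lambda>\<sigma>. 4 * (phi (Z \<sigma>) (6/25) (a \<sigma> - b \<sigma>) + phi (Z \<sigma>) (1/50) (a \<sigma> - c \<sigma>)))"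
  define Sb where "Sb = (\<lambda>\<sigma>. 4 * (phi (Z \<sigma>) (6/25) (b \<sigma> - a \<sigma>) + phi (Z \<sigma>) (6/25) (b \<sigma> - c \<sigma>)))"
  define Sc where "Sc = (\<lambda>\<sigma>. 4 * (phi (Z \<sigma>) (1/50) (c \<sigma> - a \<sigma>) + phi (Z \<sigma>) (6/25) (c \<sigma> - b \<sigma>)))"
  have init: "a 0 = -1" "b 0 = 0" "c 0 = 1"
    using sol unfolding is_flow_solution_def Yinit_def a_def b_def c_def by auto
  have der: "\<And>\<sigma> i. \<sigma> \<ge> 0 \<Longrightarrow> i \<in> {1..3} \<Longrightarrow>
     ((\<lambda>\<tau>. Y \<tau> i 1) has_real_derivative flow_rhs (\<lambda>x. exp (- x)) 1 3 pp (Y \<sigma>) i 1) (at \<sigma> within {0..})"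
    using sol unfolding is_flow_solution_def by auto
  have da: "\<And>\<sigma>. \<sigma> \<ge> 0 \<Longrightarrow> (a has_real_derivative Sa \<sigma>) (at \<sigma> within {0..})"
    using der[of _ 1] rhs2(1) unfolding a_def b_def c_def Z_def Sa_def by simp
  have db: "\<And>\<sigma>. \<sigma> \<ge> 0 \<Longrightarrow> (b has_real_derivative Sb \<sigma>) (at \<sigma> within {0..})"
    using der[of _ 2] rhs2(2) unfolding a_def b_def c_def Z_def Sb_def by simp
  have dc: "\<And>\<sigma>. \<sigma> \<ge> 0 \<Longrightarrow> (c has_real_derivative Sc \<sigma>) (at \<sigma> within {0..})"
    using der[of _ 3] rhs2(3) unfolding a_def b_def c_def Z_def Sc_def by simp
  have Zpos: "\<And>\<sigma>. Z \<sigma> > 0" unfolding Z_def Z2_def using w_pos by (simp add: add_pos_pos)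
  define E where "E = (\<lambda>\<sigma>. 2 * ((6/25) * (a \<sigma> - b \<sigma>)^2 + (1/50) * (a \<sigma> - c \<sigma>)^2 + (6/25) * (b \<sigma> - c \<sigma>)^2)
      + ln (2 * (exp (- ((a \<sigma> - b \<sigma>)^2)) + exp (- ((a \<sigma> - c \<sigma>)^2)) + exp (- ((b \<sigma> - c \<sigma>)^2)))))"
  have dsq: "((\<lambda>\<tau>. (f \<tau> - g \<tau>)^2) has_real_derivative 2*(f \<sigma> - g \<sigma>)*(F' - G')) (at \<sigma> within {0..})"
    if "(f has_real_derivative F') (at \<sigma> within {0..})" "(g has_real_derivative G') (at \<sigma> within {0..})"
    for f g :: "real \<Rightarrow> real" and F' G' \<sigma>
    by (rule DERIV_cong[OF DERIV_power[OF DERIV_diff[OF that], of 2]]) simp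
  have dex: "((\<lambda>\<tau>. exp (- ((f \<tau> - g \<tau>)^2))) has_real_derivative
      exp (- ((f \<sigma> - g \<sigma>)^2)) * (- (2*(f \<sigma> - g \<sigma>)*(F' - G')))) (at \<sigma> within {0..})"
    if "(f has_real_derivative F') (at \<sigma> within {0..})" "(g has_real_derivative G') (at \<sigma> within {0..})"
    for f g :: "real \<Rightarrow> real" and F' G' \<sigma>
    by (rule DERIV_cong[OF DERIV_chain'[OF DERIV_minus[OF dsq[OF that]] DERIV_exp]]) simp
  have dE: "(E has_real_derivative
      4 * ((6/25 - w (a \<sigma> - b \<sigma>) / Z \<sigma>) * (a \<sigma> - b \<sigma>) * (Sa \<sigma> - Sb \<sigma>)
         + (1/50 - w (a \<sigma> - c \<sigma>) / Z \<sigma>) * (a \<sigma> - c \<sigma>) * (Sa \<sigma> - Sc \<sigma>)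
         + (6/25 - w (b \<sigma> - c \<sigma>) / Z \<sigma>) * (b \<sigma> - c \<sigma>) * (Sb \<sigma> - Sc \<sigma>))) (at \<sigma> within {0..})"
    if s: "\<sigma> \<ge> 0" for \<sigma>
  proof -
    have zp: "0 < 2 * (exp (- ((a \<sigma> - b \<sigma>)^2)) + exp (- ((a \<sigma> - c \<sigma>)^2)) + exp (- ((b \<sigma> - c \<sigma>)^2)))"
      by (simp add: add_pos_pos)
    have zz: "Z \<sigma> = 2 * (exp (- ((a \<sigma> - b \<sigma>)^2)) + exp (- ((a \<sigma> - c \<sigma>)^2)) + exp (- ((b \<sigma> - c \<sigma>)^2)))"
      unfolding Z_def Z2_def w_def by simp
    have zz': "2 * (w (a \<sigma> - b \<sigma>) + w (a \<sigma> - c \<sigma>) + w (b \<sigma> - c \<sigma>)) = Z \<sigma>"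
      unfolding Z_def Z2_def by simp
    have d1: "((\<lambda>\<tau>. 2 * ((6/25) * (a \<tau> - b \<tau>)^2 + (1/50) * (a \<tau> - c \<tau>)^2 + (6/25) * (b \<tau> - c \<tau>)^2))
       has_real_derivative 2 * ((6/25) * (2*(a \<sigma> - b \<sigma>)*(Sa \<sigma> - Sb \<sigma>)) + (1/50) * (2*(a \<sigma> - c \<sigma>)*(Sa \<sigma> - Sc \<sigma>))
          + (6/25) * (2*(b \<sigma> - c \<sigma>)*(Sb \<sigma> - Sc \<sigma>)))) (at \<sigma> within {0..})"
      by (intro DERIV_cmult DERIV_add dsq da db dc s)
    have d2: "((\<lambda>\<tau>. 2 * (exp (- ((a \<tau> - b \<tau>)^2)) + exp (- ((a \<tau> - c \<tau>)^2)) + exp (- ((b \<tau> - c \<tau>)^2))))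
       has_real_derivative 2 * (exp (- ((a \<sigma> - b \<sigma>)^2)) * (- (2*(a \<sigma> - b \<sigma>)*(Sa \<sigma> - Sb \<sigma>)))
          + exp (- ((a \<sigma> - c \<sigma>)^2)) * (- (2*(a \<sigma> - c \<sigma>)*(Sa \<sigma> - Sc \<sigma>)))
          + exp (- ((b \<sigma> - c \<sigma>)^2)) * (- (2*(b \<sigma> - c \<sigma>)*(Sb \<sigma> - Sc \<sigma>))))) (at \<sigma> within {0..})"
      by (intro DERIV_cmult DERIV_add dex da db dc s)
    note d3 = DERIV_chain'[OF d2 DERIV_ln_divide[OF zp]]
    note d4 = DERIV_add[OF d1 d3]
    show ?thesis unfolding E_def
    proof (rule DERIV_cong[OF d4])
      show "2 * ((6/25) * (2*(a \<sigma> - b \<sigma>)*(Sa \<sigma> - Sb \<sigma>)) + (1/50) * (2*(a \<sigma> - c \<sigma>)*(Sa \<sigma> - Sc \<sigma>))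
          + (6/25) * (2*(b \<sigma> - c \<sigma>)*(Sb \<sigma> - Sc \<sigma>))) +
        1 / (2 * (exp (- ((a \<sigma> - b \<sigma>)^2)) + exp (- ((a \<sigma> - c \<sigma>)^2)) + exp (- ((b \<sigma> - c \<sigma>)^2)))) *
        (2 * (exp (- ((a \<sigma> - b \<sigma>)^2)) * (- (2*(a \<sigma> - b \<sigma>)*(Sa \<sigma> - Sb \<sigma>)))
          + exp (- ((a \<sigma> - c \<sigma>)^2)) * (- (2*(a \<sigma> - c \<sigma>)*(Sa \<sigma> - Sc \<sigma>)))
          + exp (- ((b \<sigma> - c \<sigma>)^2)) * (- (2*(b \<sigma> - c \<sigma>)*(Sb \<sigma> - Sc \<sigma>))))) =
      4 * ((6/25 - w (a \<sigma> - b \<sigma>) / Z \<sigma>) * (a \<sigma> - b \<sigma>) * (Sa \<sigma> - Sb \<sigma>)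
         + (1/50 - w (a \<sigma> - c \<sigma>) / Z \<sigma>) * (a \<sigma> - c \<sigma>) * (Sa \<sigma> - Sc \<sigma>)
         + (6/25 - w (b \<sigma> - c \<sigma>) / Z \<sigma>) * (b \<sigma> - c \<sigma>) * (Sb \<sigma> - Sc \<sigma>))"
        unfolding w_def[symmetric] unfolding zz' using Zpos[of \<sigma>]
        by (rule dEalg)
    qed
  qed
  have nE: "\<And>\<sigma>. 4 * ((6/25 - w (a \<sigma> - b \<sigma>) / Z \<sigma>) * (a \<sigma> - b \<sigma>) * (Sa \<sigma> - Sb \<sigma>)
         + (1/50 - w (a \<sigma> - c \<sigma>) / Z \<sigma>) * (a \<sigma> - c \<sigma>) * (Sa \<sigma> - Sc \<sigma>)
         + (6/25 - w (b \<sigma> - c \<sigma>) / Z \<sigma>) * (b \<sigma> - c \<sigma>) * (Sb \<sigma> - Sc \<sigma>)) \<le> 0"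
  proof -
    fix \<sigma>
    have e: "w (b \<sigma> - a \<sigma>) = w (a \<sigma> - b \<sigma>)" "w (c \<sigma> - a \<sigma>) = w (a \<sigma> - c \<sigma>)" "w (c \<sigma> - b \<sigma>) = w (b \<sigma> - c \<sigma>)"
      by (simp_all add: w_def power2_commute)
    have "Sa \<sigma> = 4 * ((w (a \<sigma> - b \<sigma>) / Z \<sigma> - 6/25) * (a \<sigma> - b \<sigma>) + (w (a \<sigma> - c \<sigma>) / Z \<sigma> - 1/50) * (a \<sigma> - c \<sigma>))"
      "Sb \<sigma> = 4 * ((w (a \<sigma> - b \<sigma>) / Z \<sigma> - 6/25) * (b \<sigma> - a \<sigma>) + (w (b \<sigma> - c \<sigma>) / Z \<sigma> - 6/25) * (b \<sigma> - c \<sigma>))"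
      "Sc \<sigma> = 4 * ((w (a \<sigma> - c \<sigma>) / Z \<sigma> - 1/50) * (c \<sigma> - a \<sigma>) + (w (b \<sigma> - c \<sigma>) / Z \<sigma> - 6/25) * (c \<sigma> - b \<sigma>))"
      unfolding Sa_def Sb_def Sc_def phi_def e by simp_all
    note eqs = this
    have e2: "4 * ((6/25 - w (a \<sigma> - b \<sigma>) / Z \<sigma>) * (a \<sigma> - b \<sigma>) * (Sa \<sigma> - Sb \<sigma>)
         + (1/50 - w (a \<sigma> - c \<sigma>) / Z \<sigma>) * (a \<sigma> - c \<sigma>) * (Sa \<sigma> - Sc \<sigma>)
         + (6/25 - w (b \<sigma> - c \<sigma>) / Z \<sigma>) * (b \<sigma> - c \<sigma>) * (Sb \<sigma> - Sc \<sigma>)) = - ((Sa \<sigma>)^2 + (Sb \<sigma>)^2 + (Sc \<sigma>)^2)"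
      unfolding eqs
      by (rule alg2)
    show "?thesis \<sigma>" unfolding e2
      using zero_le_power2[of "Sa \<sigma>"] zero_le_power2[of "Sb \<sigma>"] zero_le_power2[of "Sc \<sigma>"] by linarith
  qed
  have Emono: "E t \<le> E 0" by (rule mono0[OF dE nE t])
  have E0: "E 0 = 28/25 + ln (4 * exp (-1) + 2 * exp (-4))"
    unfolding E_def init by (simp add: algebra_simps)
  have E0b: "E 0 < ln 6 - 1/100"
  proof -
    have "ln (4 * exp (-1) + 2 * exp (-4)) < ln (6 * exp (- (113/100::real)))"
      using exp_bound by (subst ln_less_cancel_iff) (auto simp: add_pos_pos)
    also have "ln (6 * exp (- (113/100::real))) = ln 6 - 113/100" by (simp add: ln_mult)
    finally show ?thesis unfolding E0 by simp
  qed
  show ?thesis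
  proof (rule ccontr)
    assume "\<not> ?thesis"
    then have dsm: "diam_conf 1 3 (Y t) < 1/10" by simp
    have sq: "x^2 < 1/100" if "\<bar>x\<bar> < 1/10" for x :: real
    proof -
      have "\<bar>x\<bar>^2 < (1/10)^2" by (rule power_strict_mono) (use that in auto)
      moreover have "(1/10::real)^2 = 1/100" by (simp add: power2_eq_square)
      ultimately show ?thesis by simp
    qed
    have d1: "(a t - b t)^2 < 1/100" using diam_ge[of 1 3 2 "Y t"] dsm sq unfolding a_def b_def by auto
    have d2: "(a t - c t)^2 < 1/100" using diam_ge[of 1 3 3 "Y t"] dsm sq unfolding a_def c_def by auto
    have d3: "(b t - c t)^2 < 1/100" using diam_ge[of 2 3 3 "Y t"] dsm sq unfolding b_def c_def by auto
    have "exp (- (1/100)) < exp (- ((a t - b t)^2))" "exp (- (1/100)) < exp (- ((a t - c t)^2))"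
      "exp (- (1/100)) < exp (- ((b t - c t)^2))" using d1 d2 d3 by simp_all
    then have "6 * exp (- (1/100::real)) < 2 * (exp (- ((a t - b t)^2)) + exp (- ((a t - c t)^2)) + exp (- ((b t - c t)^2)))"
      by (rule six)
    then have "ln (6 * exp (- (1/100::real))) < ln (2 * (exp (- ((a t - b t)^2)) + exp (- ((a t - c t)^2)) + exp (- ((b t - c t)^2))))"
      by (rule ln_strict_mono) simp_all
    moreover have "ln (6 * exp (- (1/100::real))) = ln 6 - 1/100" by (simp add: ln_mult)
    moreover have "0 \<le> 2 * ((6/25) * (a t - b t)^2 + (1/50) * (a t - c t)^2 + (6/25) * (b t - c t)^2)" by simp
    ultimately have "E t > ln 6 - 1/100" unfolding E_def by linarith
    then show False using Emono E0b by linarith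
  qed
qed


theorem theorem1p2:
  shows "(\<exists>s n p Y0 (c::real). 1 \<le> s \<and> s + 1 < n \<and> sym_pos_prob n p \<and> c > 0 \<and>
            (\<forall>Y. is_flow_solution (\<lambda>x. 1 / (1 + x)) s n p Y0 Y \<longrightarrow>
               (\<forall>t\<ge>0. diam_conf s n (Y t) \<ge> c * t powr (1/4))))
       \<and> (\<exists>s n p Y0 (c::real). 1 \<le> s \<and> s + 1 < n \<and> sym_pos_prob n p \<and> c > 0 \<and>
            (\<forall>Y. is_flow_solution (\<lambda>x. exp (- x)) s n p Y0 Y \<longrightarrow>
               (\<forall>t\<ge>0. diam_conf s n (Y t) \<ge> c)))"
proof
  show "\<exists>s n p Y0 (c::real). 1 \<le> s \<and> s + 1 < n \<and> sym_pos_prob n p \<and> c > 0 \<and>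
            (\<forall>Y. is_flow_solution (\<lambda>x. 1 / (1 + x)) s n p Y0 Y \<longrightarrow>
               (\<forall>t\<ge>0. diam_conf s n (Y t) \<ge> c * t powr (1/4)))"
  proof (rule exI[of _ "1::nat"], rule exI[of _ "3::nat"], rule exI[of _ pp], rule exI[of _ Yinit], rule exI[of _ "1::real"], intro conjI allI impI)
    fix Y :: "real \<Rightarrow> nat \<Rightarrow> nat \<Rightarrow> real" and t :: real
    assume "is_flow_solution (\<lambda>x. 1 / (1 + x)) 1 3 pp Yinit Y" "0 \<le> t"
    then show "1 * t powr (1/4) \<le> diam_conf 1 3 (Y t)" by (rule part1)
  qed (simp_all add: sym_pp)
  show "\<exists>s n p Y0 (c::real). 1 \<le> s \<and> s + 1 < n \<and> sym_pos_prob n p \<and> c > 0 \<and>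
            (\<forall>Y. is_flow_solution (\<lambda>x. exp (- x)) s n p Y0 Y \<longrightarrow>
               (\<forall>t\<ge>0. diam_conf s n (Y t) \<ge> c))"
  proof (rule exI[of _ "1::nat"], rule exI[of _ "3::nat"], rule exI[of _ pp], rule exI[of _ Yinit], rule exI[of _ "1/10::real"], intro conjI allI impI)
    fix Y :: "real \<Rightarrow> nat \<Rightarrow> nat \<Rightarrow> real" and t :: real
    assume "is_flow_solution (\<lambda>x. exp (- x)) 1 3 pp Yinit Y" "0 \<le> t"
    then show "1/10 \<le> diam_conf 1 3 (Y t)" by (rule part2)
  qed (simp_all add: sym_pp)
qed

end
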